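(* Let $(\mathbf{L},\mathbf{R})\in\mathcal{P}_{\mathsf N}$ be centered and suppose $\mathbf{L}\preceq^{\mathrm{BC}}\mathbf{R}$, i.e. $v\mathbf{L}\preceq v\mathbf{R}$ for every $v\in\{0,1\}^{\mathsf N+1}$. Then $(\mathbf{L},\mathbf{R})$ obeys region dominance: for every nonempty $X\subseteq[\mathsf N+1]$, $\big|\bigwedge_{i\in X}\mathbf{L}_{(i)}\big|\le\big|\bigwedge_{i\in X}\mathbf{R}_{(i)}\big|$ (and the pair is balanced).
   Context: $\mathcal{P}_{\mathsf N}$ denotes the set of pairs $(\mathbf{L},\mathbf{R})$ of $(0,1)$-matrices, $\mathbf{L}$ of size $(\mathsf N+1)\times m_L$ and $\mathbf{R}$ of size $(\mathsf N+1)\times m_R$, such that some index $p\in[\mathsf N+1]$ has row $p$ of $\mathbf{L}$ and row $p$ of $\mathbf{R}$ both zero. $\mathbf{A}_{(i)}$ is the $i$-th row; $e$ the all-ones row vector; $|v|=\sum_k|v_k|$; $\wedge$ is the bitwise AND of bit strings. The pair is centered if it is balanced ($|\mathbf{L}_{(i)}|=|\mathbf{R}_{(i)}|$ for all $i$) and some row satisfies $\mathbf{L}_{(i)}=e=\mathbf{R}_{(i)}$ (so both matrices have the same number of columns). For $x,y\in\mathbb{R}^d$, $x\preceq y$ means $\sum_{n=1}^k x^\downarrow_n\le\sum_{n=1}^k y^\downarrow_n$ for $k=1,\dots,d-1$ and $\sum_{n=1}^d x_n=\sum_{n=1}^d y_n$, with $x^\downarrow_n$ the $n$-th largest component. Thus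 $\big|\bigwedge_{i\in X}\mathbf{L}_{(i)}\big|$ is the number of columns of $\mathbf{L}$ having a $1$ in every row indexed by $X$. *)

theory Defs
  imports Complex_Main
begin

text \<open>Matrices are functions from (row, column) indices to entries; rows are indexed
  by 0..N (i.e. N+1 rows), columns by 0..<m.\<close>

definition zero_one_mat :: "nat \<Rightarrow> nat \<Rightarrow> (nat \<Rightarrow> nat \<Rightarrow> nat) \<Rightarrow> bool" where
  "zero_one_mat r c A \<longleftrightarrow> (\<forall>i<r. \<forall>j<c. A i j \<in> {0, 1})"

definition in_P :: "nat \<Rightarrow> nat \<Rightarrow> nat \<Rightarrow> (nat \<Rightarrow> nat \<Rightarrow> nat) \<Rightarrow> (nat \<Rightarrow> nat \<Rightarrow> nat) \<Rightarrow> bool" where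
  "in_P N mL mR L R \<longleftrightarrow> zero_one_mat (N+1) mL L \<and> zero_one_mat (N+1) mR R \<and>
     (\<exists>p<N+1. (\<forall>j<mL. L p j = 0) \<and> (\<forall>j<mR. R p j = 0))"

definition balanced :: "nat \<Rightarrow> nat \<Rightarrow> nat \<Rightarrow> (nat \<Rightarrow> nat \<Rightarrow> nat) \<Rightarrow> (nat \<Rightarrow> nat \<Rightarrow> nat) \<Rightarrow> bool" where
  "balanced N mL mR L R \<longleftrightarrow> (\<forall>i<N+1. (\<Sum>j<mL. L i j) = (\<Sum>j<mR. R i j))"

definition centered :: "nat \<Rightarrow> nat \<Rightarrow> nat \<Rightarrow> (nat \<Rightarrow> nat \<Rightarrow> nat) \<Rightarrow> (nat \<Rightarrow> nat \<Rightarrow> nat) \<Rightarrow> bool" where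
  "centered N mL mR L R \<longleftrightarrow> mL = mR \<and> balanced N mL mR L R \<and>
     (\<exists>i<N+1. (\<forall>j<mL. L i j = 1) \<and> (\<forall>j<mR. R i j = 1))"

definition decr :: "real list \<Rightarrow> real list" where
  "decr x = rev (sort x)"

definition majorized :: "real list \<Rightarrow> real list \<Rightarrow> bool" where
  "majorized x y \<longleftrightarrow> length x = length y \<and>
     (\<forall>k\<in>{1..<length x}. sum_list (take k (decr x)) \<le> sum_list (take k (decr y))) \<and>
     sum_list x = sum_list y"

definition vec_mat :: "nat \<Rightarrow> nat \<Rightarrow> (nat \<Rightarrow> nat) \<Rightarrow> (nat \<Rightarrow> nat \<Rightarrow> nat) \<Rightarrow> real list" where
  "vec_mat N m v A = map (\<lambda>j. real (\<Sum>i<N+1. v i * A i j)) [0..<m]"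

definition BC_dominated :: "nat \<Rightarrow> nat \<Rightarrow> nat \<Rightarrow> (nat \<Rightarrow> nat \<Rightarrow> nat) \<Rightarrow> (nat \<Rightarrow> nat \<Rightarrow> nat) \<Rightarrow> bool" where
  "BC_dominated N mL mR L R \<longleftrightarrow>
     (\<forall>v. (\<forall>i<N+1. v i \<in> {0, 1}) \<longrightarrow> majorized (vec_mat N mL v L) (vec_mat N mR v R))"

definition and_rows_card :: "nat \<Rightarrow> (nat \<Rightarrow> nat \<Rightarrow> nat) \<Rightarrow> nat set \<Rightarrow> nat" where
  "and_rows_card m A X = card {j. j < m \<and> (\<forall>i\<in>X. A i j = 1)}"

definition region_dominance :: "nat \<Rightarrow> nat \<Rightarrow> nat \<Rightarrow> (nat \<Rightarrow> nat \<Rightarrow> nat) \<Rightarrow> (nat \<Rightarrow> nat \<Rightarrow> nat) \<Rightarrow> bool" where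
  "region_dominance N mL mR L R \<longleftrightarrow>
     (\<forall>X. X \<noteq> {} \<and> X \<subseteq> {0..<N+1} \<longrightarrow> and_rows_card mL L X \<le> and_rows_card mR R X)"

end

theory Submission imports Defs "HOL-Library.Multiset" begin

lemma sorted_split_le:
  fixes xs :: "real list"
  assumes "sorted xs" "\<forall>z\<in>set xs. z \<le> k"
  shows "xs = filter (\<lambda>z. z < k) xs @ filter (\<lambda>z. z = k) xs"
  using assms
proof (induction xs)
  case Nil then show ?case by simp
next
  case (Cons a xs)
  show ?case
  proof (cases "a < k")
    case True then show ?thesis using Cons by auto
  next
    case False
    then have "a = k" using Cons by auto
    then have "\<forall>z\<in>set xs. z = k" using Cons by fastforce
    then show ?thesis using \<open>a = k\<close> by (simp add: filter_id_conv)
  qed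
qed

lemma filter_eq_rep:
  fixes xs :: "real list"
  shows "filter (\<lambda>z. z = k) xs = replicate (length (filter (\<lambda>z. z = k) xs)) k"
  by (induction xs) auto

lemma decr_split:
  fixes x :: "real list"
  assumes "\<forall>z\<in>set x. z \<le> k"
  shows "decr x = replicate (length (filter (\<lambda>z. z = k) x)) k @ rev (sort (filter (\<lambda>z. z < k) x))"
proof -
  have "sort x = filter (\<lambda>z. z < k) (sort x) @ filter (\<lambda>z. z = k) (sort x)"
    by (rule sorted_split_le) (use assms in auto)
  also have "\<dots> = sort (filter (\<lambda>z. z < k) x) @ sort (filter (\<lambda>z. z = k) x)"
    by (simp add: filter_sort)
  also have "sort (filter (\<lambda>z. z = k) x) = replicate (length (filter (\<lambda>z. z = k) x)) k"
    by (subst filter_eq_rep) simp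
  finally show ?thesis unfolding decr_def by simp
qed

lemma sum_less:
  fixes ys :: "real list"
  assumes "ys \<noteq> []" "\<forall>z\<in>set ys. z < k"
  shows "sum_list ys < real (length ys) * k"
  using assms
proof (induction ys)
  case Nil then show ?case by simp
next
  case (Cons a ys)
  then show ?case by (cases "ys = []") (auto simp: algebra_simps)
qed

lemma key:
  fixes x y :: "real list"
  assumes len: "length x = length y"
    and maj: "\<forall>a \<le> length x. sum_list (take a (decr x)) \<le> sum_list (take a (decr y))"
    and bx: "\<forall>z\<in>set x. z \<le> k" and byy: "\<forall>z\<in>set y. z \<le> k"
  shows "length (filter (\<lambda>z. z = k) x) \<le> length (filter (\<lambda>z. z = k) y)"
proof (rule ccontr)
  define c where "c = length (filter (\<lambda>z. z = k) x)"
  define d where "d = length (filter (\<lambda>z. z = k) y)"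
  define ys where "ys = rev (sort (filter (\<lambda>z. z < k) y))"
  assume "\<not> ?thesis"
  then have dc: "d < c" unfolding c_def d_def by simp
  have cl: "c \<le> length x" unfolding c_def by simp
  have dx: "decr x = replicate c k @ rev (sort (filter (\<lambda>z. z < k) x))"
    using decr_split[OF bx] c_def by simp
  have dy: "decr y = replicate d k @ ys"
    using decr_split[OF byy] d_def ys_def by simp
  have "length (decr y) = length y" unfolding decr_def by simp
  then have lys: "length ys = length y - d" using dy by simp
  have ysk: "\<forall>z\<in>set ys. z < k" unfolding ys_def by simp
  have "sum_list (take c (decr x)) = real c * k" using dx by (simp add: sum_list_replicate)
  moreover have "take c (decr y) = replicate d k @ take (c - d) ys"
    using dy dc by simp
  moreover have "take (c - d) ys \<noteq> []"
  proof -
    have "0 < length ys" using lys dc cl len by linarith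
    then show ?thesis using dc by (cases ys) auto
  qed
  moreover have "\<forall>z\<in>set (take (c - d) ys). z < k" using ysk by (meson in_set_takeD)
  moreover have "length (take (c - d) ys) = c - d" using lys dc cl len by simp
  ultimately have "sum_list (take c (decr y)) < real c * k"
    using sum_less[of "take (c - d) ys" k] dc by (simp add: algebra_simps of_nat_diff sum_list_replicate)
  moreover have "sum_list (take c (decr x)) \<le> sum_list (take c (decr y))" using maj cl by simp
  ultimately show False using \<open>sum_list (take c (decr x)) = real c * k\<close> by simp
qed

lemma col01:
  fixes A :: "nat \<Rightarrow> nat"
  assumes "finite X" "\<forall>i\<in>X. A i \<in> {0,1}"
  shows "(\<Sum>i\<in>X. A i) \<le> card X \<and> ((\<Sum>i\<in>X. A i) = card X \<longleftrightarrow> (\<forall>i\<in>X. A i = 1))"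
proof -
  have le: "\<forall>i\<in>X. A i \<le> 1" using assms by auto
  have s1: "(\<Sum>i\<in>X. A i) \<le> (\<Sum>i\<in>X. 1)" by (rule sum_mono) (use le in auto)
  moreover have "(\<Sum>i\<in>X. A i) = card X \<longleftrightarrow> (\<forall>i\<in>X. A i = 1)"
  proof
    assume h: "(\<Sum>i\<in>X. A i) = card X"
    show "\<forall>i\<in>X. A i = 1"
    proof (rule ccontr)
      assume "\<not> (\<forall>i\<in>X. A i = 1)"
      then obtain i0 where "i0 \<in> X" "A i0 < 1" using le by force
      then have "(\<Sum>i\<in>X. A i) < (\<Sum>i\<in>X. 1)"
        using sum_strict_mono_ex1[OF assms(1), of A "\<lambda>_. 1"] le by blast
      then show False using h by simp
    qed
  qed simp
  ultimately show ?thesis by simp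
qed

lemma vec_mat_ind:
  assumes "X \<subseteq> {0..<N+1}"
  shows "vec_mat N m (\<lambda>i. if i \<in> X then 1 else 0) A = map (\<lambda>j. real (\<Sum>i\<in>X. A i j)) [0..<m]"
proof -
  have "\<And>j. (\<Sum>i<N+1. (if i \<in> X then 1 else 0) * A i j) = (\<Sum>i\<in>X. A i j)"
  proof -
    fix j
    have "(\<Sum>i<N+1. (if i \<in> X then 1 else 0) * A i j) = (\<Sum>i\<in>{..<N+1} \<inter> X. A i j)"
    proof -
      have "(\<Sum>i<N+1. (if i \<in> X then 1 else 0) * A i j) = (\<Sum>i<N+1. if i \<in> X then A i j else 0)"
        by (intro sum.cong) auto
      then show ?thesis by (simp add: sum.inter_restrict)
    qed
    also have "{..<N+1} \<inter> X = X" using assms by auto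
    finally show "(\<Sum>i<N+1. (if i \<in> X then 1 else 0) * A i j) = (\<Sum>i\<in>X. A i j)" .
  qed
  then show ?thesis unfolding vec_mat_def by simp
qed

lemma sum_decr: "sum_list (decr x) = sum_list x"
  unfolding decr_def by (metis mset_rev mset_sort sum_mset_sum_list)

lemma count_eq:
  fixes A :: "nat \<Rightarrow> nat \<Rightarrow> nat"
  assumes "finite X" "\<forall>i\<in>X. \<forall>j<m. A i j \<in> {0,1}"
  shows "length (filter (\<lambda>z. z = real (card X)) (map (\<lambda>j. real (\<Sum>i\<in>X. A i j)) [0..<m]))
     = and_rows_card m A X"
proof -
  have "length (filter (\<lambda>z. z = real (card X)) (map (\<lambda>j. real (\<Sum>i\<in>X. A i j)) [0..<m]))
     = card {j. j < m \<and> (\<Sum>i\<in>X. A i j) = card X}"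
    unfolding length_filter_conv_card
    by (intro arg_cong[where f=card]) (auto simp flip: of_nat_sum)
  also have "{j. j < m \<and> (\<Sum>i\<in>X. A i j) = card X} = {j. j < m \<and> (\<forall>i\<in>X. A i j = 1)}"
    using col01[OF assms(1)] assms(2) by auto
  finally show ?thesis unfolding and_rows_card_def .
qed

theorem theorem4:
  fixes N mL mR :: nat and L R :: "nat \<Rightarrow> nat \<Rightarrow> nat"
  assumes "in_P N mL mR L R"
    and "centered N mL mR L R"
    and "BC_dominated N mL mR L R"
  shows "region_dominance N mL mR L R \<and> balanced N mL mR L R"
proof
  have m: "mL = mR" and bal: "balanced N mL mR L R" using assms(2) unfolding centered_def by auto
  show "balanced N mL mR L R" by (rule bal)
  have L01: "zero_one_mat (N+1) mL L" and R01: "zero_one_mat (N+1) mR R"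
    using assms(1) unfolding in_P_def by auto
  show "region_dominance N mL mR L R"
    unfolding region_dominance_def
  proof (intro allI impI)
    fix X :: "nat set"
    assume "X \<noteq> {} \<and> X \<subseteq> {0..<N+1}"
    then have Xs: "X \<subseteq> {0..<N+1}" by simp
    have fX: "finite X" using Xs finite_subset by blast
    define v where "v = (\<lambda>i. if i \<in> X then 1 else (0::nat))"
    define k where "k = real (card X)"
    define x where "x = map (\<lambda>j. real (\<Sum>i\<in>X. L i j)) [0..<mL]"
    define y where "y = map (\<lambda>j. real (\<Sum>i\<in>X. R i j)) [0..<mR]"
    have XN: "\<forall>i\<in>X. i < N+1" using Xs by auto
    have AL: "\<forall>i\<in>X. \<forall>j<mL. L i j \<in> {0,1}" using L01 XN unfolding zero_one_mat_def by blast
    have AR: "\<forall>i\<in>X. \<forall>j<mR. R i j \<in> {0,1}" using R01 XN unfolding zero_one_mat_def by blast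
    have "majorized (vec_mat N mL v L) (vec_mat N mR v R)"
      using assms(3) unfolding BC_dominated_def v_def by auto
    then have mj: "majorized x y" unfolding x_def y_def v_def using vec_mat_ind[OF Xs] by simp
    have len: "length x = length y" unfolding x_def y_def using m by simp
    have maj: "\<forall>a \<le> length x. sum_list (take a (decr x)) \<le> sum_list (take a (decr y))"
    proof (intro allI impI)
      fix a assume a: "a \<le> length x"
      show "sum_list (take a (decr x)) \<le> sum_list (take a (decr y))"
      proof (cases "a = 0 \<or> a = length x")
        case True
        then show ?thesis
        proof
          assume "a = 0" then show ?thesis by simp
        next
          assume "a = length x"
          then have "take a (decr x) = decr x" "take a (decr y) = decr y"
            using len by (simp_all add: decr_def)
          then show ?thesis using mj unfolding majorized_def by (simp add: sum_decr)
        qed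
      next
        case False
        then show ?thesis using mj a unfolding majorized_def by auto
      qed
    qed
    have bx: "\<forall>z\<in>set x. z \<le> k"
    proof
      fix z assume "z \<in> set x"
      then obtain j where j: "j < mL" "z = real (\<Sum>i\<in>X. L i j)" unfolding x_def by auto
      have "(\<Sum>i\<in>X. L i j) \<le> card X" using col01[OF fX, of "\<lambda>i. L i j"] AL j(1) by auto
      then show "z \<le> k" unfolding k_def j(2) by (metis of_nat_le_iff)
    qed
    have byy: "\<forall>z\<in>set y. z \<le> k"
    proof
      fix z assume "z \<in> set y"
      then obtain j where j: "j < mR" "z = real (\<Sum>i\<in>X. R i j)" unfolding y_def by auto
      have "(\<Sum>i\<in>X. R i j) \<le> card X" using col01[OF fX, of "\<lambda>i. R i j"] AR j(1) by auto
      then show "z \<le> k" unfolding k_def j(2) by (metis of_nat_le_iff)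
    qed
    have "length (filter (\<lambda>z. z = k) x) \<le> length (filter (\<lambda>z. z = k) y)"
      by (rule key[OF len maj bx byy])
    then show "and_rows_card mL L X \<le> and_rows_card mR R X"
      unfolding x_def y_def k_def using count_eq[OF fX AL] count_eq[OF fX AR] by simp
  qed
qed

end
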